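(* Let $I\in\mathcal I_\lambda$, $a\in\{1,\dots,n-1\}$, with $a\in I_k$, $a+1\in I_l$, and let $s_{a,a+1}(z)=(z_1,\dots,z_{a-1},z_{a+1},z_a,z_{a+2},\dots,z_n)$. Then: if $k=l$: $W_I(t,s_{a,a+1}(z))=W_I(t,z)$; if $k<l$: $W_{s_{a,a+1}(I)}(t,z)=\frac{1-hz_a/z_{a+1}}{1-z_a/z_{a+1}}W_I(t,s_{a,a+1}(z))+(h-1)\frac{z_a/z_{a+1}}{1-z_a/z_{a+1}}W_I(t,z)$; if $k>l$: $W_{s_{a,a+1}(I)}(t,z)=\frac{1-h^{-1}z_{a+1}/z_a}{1-z_{a+1}/z_a}W_I(t,s_{a,a+1}(z))+(h^{-1}-1)\frac{z_{a+1}/z_a}{1-z_{a+1}/z_a}W_I(t,z)$. (Here the dependence on $h$ is suppressed.)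
   Context: Fix $N,n$, $\lambda\in\mathbb Z_{\ge0}^N$, $\sum\lambda_k=n$; $\lambda^{(k)}=\lambda_1+\dots+\lambda_k$, $\lambda^{\{1\}}=\sum_{k=1}^{N-1}\lambda^{(k)}$. $\mathcal I_\lambda$ = ordered partitions $I=(I_1,\dots,I_N)$ of $\{1,\dots,n\}$ with $|I_k|=\lambda_k$; $I_1\cup\dots\cup I_k=\{i^{(k)}_1<\dots<i^{(k)}_{\lambda^{(k)}}\}$; $s_{a,a+1}(I)$ is obtained from $I$ by swapping the elements $a$ and $a+1$. Weight functions: variables $t^{(k)}_a$ ($1\le k\le N-1$), $z_1,\dots,z_n$, $h$, $t^{(N)}_a=z_a$; $U_I=\prod_{k=1}^{N-1}\prod_{a=1}^{\lambda^{(k)}}\Big(\prod_{c:\,i^{(k+1)}_c<i^{(k)}_a}(1-ht^{(k+1)}_c/t^{(k)}_a)\prod_{c:\,i^{(k+1)}_c>i^{(k)}_a}(1-t^{(k+1)}_c/t^{(k)}_a)\prod_{b=a+1}^{\lambda^{(k)}}\frac{1-ht^{(k)}_b/t^{(k)}_a}{1-t^{(k)}_b/t^{(k)}_a}\Big)$ ($c\in\{1..\lambda^{(k+1)}\}$); $W_I=(1-h)^{\lambda^{\{1\}}}\mathrm{Sym}_{t^{(1)}}\cdots\mathrm{Sym}_{t^{(N-1)}}U_I$ (sum over permutations within each group $t^{(k)}$). *)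

theory Defs
  imports Complex_Main "HOL-Combinatorics.Permutations"
begin

definition lamsum :: "(nat \<Rightarrow> nat) \<Rightarrow> nat \<Rightarrow> nat" where
  "lamsum lam k = (\<Sum>j=1..k. lam j)"

definition lamsum1 :: "nat \<Rightarrow> (nat \<Rightarrow> nat) \<Rightarrow> nat" where
  "lamsum1 N lam = (\<Sum>k=1..N-1. lamsum lam k)"

definition ordered_partitions :: "nat \<Rightarrow> nat \<Rightarrow> (nat \<Rightarrow> nat) \<Rightarrow> (nat \<Rightarrow> nat set) set" where
  "ordered_partitions N n lam =
     {I. (\<forall>k\<in>{1..N}. card (I k) = lam k)
       \<and> (\<Union>k\<in>{1..N}. I k) = {1..n}
       \<and> (\<forall>k\<in>{1..N}. \<forall>j\<in>{1..N}. k \<noteq> j \<longrightarrow> I k \<inter> I j = {})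
       \<and> (\<forall>k. k \<notin> {1..N} \<longrightarrow> I k = {})}"

definition sw :: "nat \<Rightarrow> nat \<Rightarrow> nat" where
  "sw a x = (if x = a then a + 1 else if x = a + 1 then a else x)"

definition swapI :: "nat \<Rightarrow> (nat \<Rightarrow> nat set) \<Rightarrow> (nat \<Rightarrow> nat set)" where
  "swapI a I = (\<lambda>k. sw a ` I k)"

definition iel :: "(nat \<Rightarrow> nat set) \<Rightarrow> nat \<Rightarrow> nat \<Rightarrow> nat" where
  "iel I k c = sorted_list_of_set (\<Union>j\<in>{1..k}. I j) ! (c - 1)"

definition tv :: "nat \<Rightarrow> (nat \<Rightarrow> nat \<Rightarrow> 'a) \<Rightarrow> (nat \<Rightarrow> 'a) \<Rightarrow> nat \<Rightarrow> nat \<Rightarrow> 'a" where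
  "tv N t z k a = (if k = N then z a else t k a)"

definition U_fun :: "nat \<Rightarrow> (nat \<Rightarrow> nat) \<Rightarrow> 'a::field \<Rightarrow> (nat \<Rightarrow> nat set)
    \<Rightarrow> (nat \<Rightarrow> nat \<Rightarrow> 'a) \<Rightarrow> (nat \<Rightarrow> 'a) \<Rightarrow> 'a" where
  "U_fun N lam h I t z =
    (\<Prod>k=1..N-1. \<Prod>a=1..lamsum lam k.
       (\<Prod>c\<in>{c\<in>{1..lamsum lam (k+1)}. iel I (k+1) c < iel I k a}.
           1 - h * tv N t z (k+1) c / tv N t z k a)
     * (\<Prod>c\<in>{c\<in>{1..lamsum lam (k+1)}. iel I (k+1) c > iel I k a}.
           1 - tv N t z (k+1) c / tv N t z k a)
     * (\<Prod>b=a+1..lamsum lam k.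
           (1 - h * tv N t z k b / tv N t z k a) / (1 - tv N t z k b / tv N t z k a)))"

definition perm_tuples :: "nat \<Rightarrow> (nat \<Rightarrow> nat) \<Rightarrow> (nat \<Rightarrow> nat \<Rightarrow> nat) set" where
  "perm_tuples N lam =
     {\<sigma>. \<forall>k. (k \<in> {1..N-1} \<longrightarrow> \<sigma> k permutes {1..lamsum lam k})
             \<and> (k \<notin> {1..N-1} \<longrightarrow> \<sigma> k = id)}"

text \<open>W_I = (1-h)^{lambda^{1}} Sym_{t^(1)} ... Sym_{t^(N-1)} U_I (sum over permutations).\<close>
definition W_fun :: "nat \<Rightarrow> (nat \<Rightarrow> nat) \<Rightarrow> 'a::field \<Rightarrow> (nat \<Rightarrow> nat set)
    \<Rightarrow> (nat \<Rightarrow> nat \<Rightarrow> 'a) \<Rightarrow> (nat \<Rightarrow> 'a) \<Rightarrow> 'a" where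
  "W_fun N lam h I t z = (1 - h) ^ lamsum1 N lam *
     (\<Sum>\<sigma>\<in>perm_tuples N lam. U_fun N lam h I (\<lambda>k b. t k (\<sigma> k b)) z)"

end

theory Submission
  imports Defs
begin

definition gx :: "complex \<Rightarrow> nat \<Rightarrow> nat \<Rightarrow> complex \<Rightarrow> complex \<Rightarrow> complex" where
  "gx h x y s u = (if y < x then 1 - h * s / u else if x < y then 1 - s / u else 1)"

definition dd :: "complex \<Rightarrow> complex \<Rightarrow> complex \<Rightarrow> complex" where
  "dd h u1 u2 = (1 - h * u2 / u1) / (1 - u2 / u1)"

definition CP :: "complex \<Rightarrow> (nat \<Rightarrow> nat) \<Rightarrow> (nat \<Rightarrow> nat) \<Rightarrow> (nat \<times> nat) set
    \<Rightarrow> (nat \<Rightarrow> complex) \<Rightarrow> (nat \<Rightarrow> complex) \<Rightarrow> complex" where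
  "CP h x y R u v = (\<Prod>p\<in>R. gx h (x (fst p)) (y (snd p)) (v (snd p)) (u (fst p)))"

definition DP :: "complex \<Rightarrow> (nat \<times> nat) set \<Rightarrow> (nat \<Rightarrow> complex) \<Rightarrow> complex" where
  "DP h R u = (\<Prod>p\<in>R. dd h (u (fst p)) (u (snd p)))"

definition Pairs :: "nat \<Rightarrow> (nat \<times> nat) set" where
  "Pairs M = Sigma {1..M} (\<lambda>a. {a+1..M})"

definition Lf :: "complex \<Rightarrow> (nat \<Rightarrow> nat) \<Rightarrow> (nat \<Rightarrow> nat \<Rightarrow> nat) \<Rightarrow> nat
    \<Rightarrow> (nat \<Rightarrow> complex) \<Rightarrow> (nat \<Rightarrow> complex) \<Rightarrow> complex" where
  "Lf h m e j u v = CP h (e j) (e (Suc j)) ({1..m j} \<times> {1..m (Suc j)}) u v * DP h (Pairs (m j)) u"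

lemma U_fun_Lf:
  "U_fun N lam h I t z = (\<Prod>k=1..N-1. Lf h (lamsum lam) (iel I) k (tv N t z k) (tv N t z (k+1)))"
proof -
  have "(\<Prod>a=1..lamsum lam k.
       (\<Prod>c\<in>{c\<in>{1..lamsum lam (k+1)}. iel I (k+1) c < iel I k a}.
           1 - h * tv N t z (k+1) c / tv N t z k a)
     * (\<Prod>c\<in>{c\<in>{1..lamsum lam (k+1)}. iel I (k+1) c > iel I k a}.
           1 - tv N t z (k+1) c / tv N t z k a)
     * (\<Prod>b=a+1..lamsum lam k.
           (1 - h * tv N t z k b / tv N t z k a) / (1 - tv N t z k b / tv N t z k a)))
    = Lf h (lamsum lam) (iel I) k (tv N t z k) (tv N t z (k+1))" for k
  proof -
    let ?C = "{1..lamsum lam (k+1)}"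
    have 1: "(\<Prod>c\<in>{c\<in>?C. iel I (k+1) c < iel I k a}. 1 - h * tv N t z (k+1) c / tv N t z k a)
     * (\<Prod>c\<in>{c\<in>?C. iel I (k+1) c > iel I k a}. 1 - tv N t z (k+1) c / tv N t z k a)
     = (\<Prod>c\<in>?C. gx h (iel I k a) (iel I (Suc k) c) (tv N t z (k+1) c) (tv N t z k a))" for a
      unfolding prod.inter_filter[OF finite_atLeastAtMost] prod.distrib[symmetric]
      by (rule prod.cong) (auto simp: gx_def)
    have c1: "(\<Prod>a=1..lamsum lam k. \<Prod>c\<in>?C. gx h (iel I k a) (iel I (Suc k) c) (tv N t z (k+1) c) (tv N t z k a))
        = CP h (iel I k) (iel I (Suc k)) ({1..lamsum lam k} \<times> {1..lamsum lam (Suc k)}) (tv N t z k) (tv N t z (k+1))"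
      by (simp add: CP_def prod.cartesian_product split_def)
    moreover have c2: "(\<Prod>a=1..lamsum lam k. \<Prod>b=a+1..lamsum lam k.
           (1 - h * tv N t z k b / tv N t z k a) / (1 - tv N t z k b / tv N t z k a))
        = DP h (Pairs (lamsum lam k)) (tv N t z k)"
      by (simp add: DP_def Pairs_def dd_def prod.Sigma split_def)
    show ?thesis
      unfolding Lf_def c1[symmetric] c2[symmetric] prod.distrib[symmetric]
      by (rule prod.cong[OF refl]) (simp only: 1)
  qed
  then show ?thesis by (simp add: U_fun_def)
qed

primrec Sy :: "complex \<Rightarrow> (nat\<Rightarrow>nat) \<Rightarrow> (nat\<Rightarrow>nat\<Rightarrow>nat) \<Rightarrow> (nat\<Rightarrow>nat\<Rightarrow>complex) \<Rightarrow> nat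
   \<Rightarrow> (nat\<Rightarrow>complex) \<Rightarrow> complex" where
  "Sy h m e t 0 v = 1"
| "Sy h m e t (Suc j) v = (if j = 0 then 1 else
      (\<Sum>\<pi>\<in>{\<pi>. \<pi> permutes {1..m j}}. Sy h m e t j (t j \<circ> \<pi>) * Lf h m e j (t j \<circ> \<pi>) v))"

definition PT :: "(nat \<Rightarrow> nat) \<Rightarrow> nat \<Rightarrow> (nat \<Rightarrow> nat \<Rightarrow> nat) set" where
  "PT m j = {\<sigma>. \<forall>k. (k \<in> {1..j-1} \<longrightarrow> \<sigma> k permutes {1..m k}) \<and> (k \<notin> {1..j-1} \<longrightarrow> \<sigma> k = id)}"

definition tw :: "(nat\<Rightarrow>nat\<Rightarrow>complex) \<Rightarrow> (nat \<Rightarrow> nat \<Rightarrow> nat) \<Rightarrow> (nat\<Rightarrow>complex) \<Rightarrow> nat \<Rightarrow> nat \<Rightarrow> nat \<Rightarrow> complex" where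
  "tw t \<sigma> v j i = (if i = j then v else t i \<circ> \<sigma> i)"

lemma PT_bij:
  assumes "j \<ge> 1"
  shows "bij_betw (\<lambda>(\<sigma>,\<pi>). \<sigma>(j:=\<pi>)) (PT m j \<times> {\<pi>. \<pi> permutes {1..m j}}) (PT m (Suc j))"
proof (rule bij_betw_byWitness[where f'="\<lambda>\<tau>. (\<tau>(j:=id), \<tau> j)"])
  show "\<forall>a\<in>PT m j \<times> {\<pi>. \<pi> permutes {1..m j}}. (\<lambda>\<tau>. (\<tau>(j := id), \<tau> j)) ((\<lambda>(\<sigma>, \<pi>). \<sigma>(j := \<pi>)) a) = a"
    using assms by (force simp: PT_def fun_eq_iff)
  show "\<forall>a'\<in>PT m (Suc j). (\<lambda>(\<sigma>, \<pi>). \<sigma>(j := \<pi>)) ((\<lambda>\<tau>. (\<tau>(j := id), \<tau> j)) a') = a'"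
    by auto
  show "(\<lambda>(\<sigma>, \<pi>). \<sigma>(j := \<pi>)) ` (PT m j \<times> {\<pi>. \<pi> permutes {1..m j}}) \<subseteq> PT m (Suc j)"
    using assms by (auto simp: PT_def)
  show "(\<lambda>\<tau>. (\<tau>(j := id), \<tau> j)) ` PT m (Suc j) \<subseteq> PT m j \<times> {\<pi>. \<pi> permutes {1..m j}}"
    using assms by (auto simp: PT_def)
qed

lemma Sy_decomp:
  "1 \<le> j \<Longrightarrow> Sy h m e t j v = (\<Sum>\<sigma>\<in>PT m j. \<Prod>i=1..j-1. Lf h m e i (tw t \<sigma> v j i) (tw t \<sigma> v j (i+1)))"
proof (induction j arbitrary: v rule: nat_induct_at_least)
  case base
  have "PT m 1 = {\<lambda>k. id}" by (auto simp: PT_def)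
  then show ?case by simp
next
  case (Suc j)
  let ?P = "{\<pi>. \<pi> permutes {1..m j}}"
  have "(\<Sum>\<sigma>\<in>PT m (Suc j). \<Prod>i=1..Suc j-1. Lf h m e i (tw t \<sigma> v (Suc j) i) (tw t \<sigma> v (Suc j) (i+1)))
     = (\<Sum>x\<in>PT m j \<times> ?P. (\<lambda>\<sigma>. \<Prod>i=1..Suc j-1. Lf h m e i (tw t \<sigma> v (Suc j) i) (tw t \<sigma> v (Suc j) (i+1)))
            ((\<lambda>(\<sigma>,\<pi>). \<sigma>(j:=\<pi>)) x))"
    by (rule sum.reindex_bij_betw[symmetric, OF PT_bij[OF Suc.hyps]])
  also have "\<dots> = (\<Sum>\<sigma>\<in>PT m j. \<Sum>\<pi>\<in>?P. \<Prod>i=1..j. Lf h m e i (tw t (\<sigma>(j:=\<pi>)) v (Suc j) i) (tw t (\<sigma>(j:=\<pi>)) v (Suc j) (i+1)))"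
    by (simp add: sum.cartesian_product split_def)
  also have "\<dots> = (\<Sum>\<pi>\<in>?P. \<Sum>\<sigma>\<in>PT m j. (\<Prod>i=1..j-1. Lf h m e i (tw t \<sigma> (t j \<circ> \<pi>) j i) (tw t \<sigma> (t j \<circ> \<pi>) j (i+1)))
          * Lf h m e j (t j \<circ> \<pi>) v)"
  proof -
    have "(\<Prod>i=1..j. Lf h m e i (tw t (\<sigma>(j:=\<pi>)) v (Suc j) i) (tw t (\<sigma>(j:=\<pi>)) v (Suc j) (i+1)))
      = (\<Prod>i=1..j-1. Lf h m e i (tw t \<sigma> (t j \<circ> \<pi>) j i) (tw t \<sigma> (t j \<circ> \<pi>) j (i+1)))
          * Lf h m e j (t j \<circ> \<pi>) v" for \<sigma> \<pi>
    proof -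
      have e: "{1..j} = insert j {1..j-1}" using Suc.hyps by auto
      have "(\<Prod>i=1..j-1. Lf h m e i (tw t (\<sigma>(j:=\<pi>)) v (Suc j) i) (tw t (\<sigma>(j:=\<pi>)) v (Suc j) (i+1)))
         = (\<Prod>i=1..j-1. Lf h m e i (tw t \<sigma> (t j \<circ> \<pi>) j i) (tw t \<sigma> (t j \<circ> \<pi>) j (i+1)))"
        by (rule prod.cong) (auto simp: tw_def)
      moreover have "j \<notin> {1..j-1}" using Suc.hyps by auto
      ultimately show ?thesis
        apply (subst e)
        apply (subst prod.insert)
          apply simp
         apply simp
        apply (simp add: tw_def mult.commute)
        done
    qed
    then show ?thesis by (simp add: sum.swap[of _ "PT m j"])
  qed
  also have "\<dots> = Sy h m e t (Suc j) v"
    using Suc.hyps by (simp add: Suc.IH sum_distrib_right comp_def)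
  finally show ?case by simp
qed

lemma W_Sy:
  assumes "N \<ge> 1"
  shows "W_fun N lam h I t z = (1 - h) ^ lamsum1 N lam * Sy h (lamsum lam) (iel I) t N z"
proof -
  have "perm_tuples N lam = PT (lamsum lam) N" by (simp add: perm_tuples_def PT_def)
  moreover have "U_fun N lam h I (\<lambda>k b. t k (\<sigma> k b)) z
     = (\<Prod>i=1..N-1. Lf h (lamsum lam) (iel I) i (tw t \<sigma> z N i) (tw t \<sigma> z N (i+1)))" for \<sigma>
  proof -
    have "tv N (\<lambda>k b. t k (\<sigma> k b)) z i = tw t \<sigma> z N i" for i
      by (auto simp: tv_def tw_def fun_eq_iff)
    then show ?thesis by (simp add: U_fun_Lf)
  qed
  ultimately show ?thesis using assms by (simp add: W_fun_def Sy_decomp)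
qed

definition al :: "complex \<Rightarrow> complex \<Rightarrow> complex \<Rightarrow> complex" where
  "al h x y = (1 - h * x / y) / (1 - x / y)"
definition be :: "complex \<Rightarrow> complex \<Rightarrow> complex \<Rightarrow> complex" where
  "be h x y = (h - 1) * ((x / y) / (1 - x / y))"
definition al' :: "complex \<Rightarrow> complex \<Rightarrow> complex \<Rightarrow> complex" where
  "al' h x y = (1 - inverse h * y / x) / (1 - y / x)"
definition be' :: "complex \<Rightarrow> complex \<Rightarrow> complex \<Rightarrow> complex" where
  "be' h x y = (inverse h - 1) * ((y / x) / (1 - y / x))"
definition ff :: "complex \<Rightarrow> complex \<Rightarrow> complex \<Rightarrow> complex \<Rightarrow> complex \<Rightarrow> complex" where
  "ff h u1 u2 v1 v2 = (1 - v2/u1) * (1 - h*v1/u2) * dd h u1 u2"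

lemma one_minus_div: "y \<noteq> 0 \<Longrightarrow> 1 - x / y = (y - x) / (y::complex)"
  by (simp add: field_simps)
lemma one_minus_hdiv: "y \<noteq> 0 \<Longrightarrow> 1 - h * x / y = (y - h * x) / (y::complex)"
  by (simp add: field_simps)

lemma al_eq: "y \<noteq> 0 \<Longrightarrow> x \<noteq> y \<Longrightarrow> al h x y = (y - h*x) / (y - x)"
  by (simp add: al_def one_minus_div one_minus_hdiv)
lemma be_eq: "y \<noteq> 0 \<Longrightarrow> x \<noteq> y \<Longrightarrow> be h x y = (h - 1) * x / (y - x)"
  by (simp add: be_def one_minus_div)
lemma al'_eq: "x \<noteq> 0 \<Longrightarrow> h \<noteq> 0 \<Longrightarrow> x \<noteq> y \<Longrightarrow> al' h x y = (h*x - y) / (h * (x - y))"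
  by (simp add: al'_def one_minus_div field_simps)
lemma be'_eq: "x \<noteq> 0 \<Longrightarrow> h \<noteq> 0 \<Longrightarrow> x \<noteq> y \<Longrightarrow> be' h x y = (1 - h) * y / (h * (x - y))"
  by (simp add: be'_def one_minus_div field_simps)
lemma ff_eq: "u1 \<noteq> 0 \<Longrightarrow> u2 \<noteq> 0 \<Longrightarrow> u1 \<noteq> u2 \<Longrightarrow>
   ff h u1 u2 v1 v2 = (u1 - v2) * (u2 - h * v1) * (u1 - h * u2) / (u1 * u2 * (u1 - u2))"
  by (simp add: ff_def dd_def one_minus_div one_minus_hdiv)

lemma I1:
  assumes "u1 \<noteq> 0" "u2 \<noteq> 0" "u1 \<noteq> u2" "v1 \<noteq> 0" "v2 \<noteq> 0" "v1 \<noteq> v2"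
  shows "al h u2 u1 * ff h u2 u1 v1 v2 + be h u1 u2 * ff h u1 u2 v1 v2
       = al h v1 v2 * ff h u1 u2 v2 v1 + be h v1 v2 * ff h u1 u2 v1 v2"
proof -
  have a: "u1 - u2 \<noteq> 0" "u2 - u1 \<noteq> 0" "v1 - v2 \<noteq> 0" "v2 - v1 \<noteq> 0" using assms by auto
  show ?thesis using assms a
    by (simp add: al_eq be_eq ff_eq divide_simps; simp add: algebra_simps)
qed

lemma I2:
  assumes "u1 \<noteq> 0" "u2 \<noteq> 0" "u1 \<noteq> u2" "v1 \<noteq> 0" "v2 \<noteq> 0" "v1 \<noteq> v2" "h \<noteq> 0"
  shows "al' h u2 u1 * ff h u2 u1 v1 v2 + be' h u1 u2 * ff h u1 u2 v1 v2
       = al' h v1 v2 * ff h u1 u2 v2 v1 + be' h v1 v2 * ff h u1 u2 v1 v2"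
proof -
  have a: "u1 - u2 \<noteq> 0" "u2 - u1 \<noteq> 0" "v1 - v2 \<noteq> 0" "v2 - v1 \<noteq> 0" using assms by auto
  show ?thesis using assms a
    by (simp add: al'_eq be'_eq ff_eq divide_simps; simp add: algebra_simps)
qed

lemma I3:
  assumes "u1 \<noteq> 0" "u2 \<noteq> 0" "u1 \<noteq> u2"
  shows "ff h u1 u2 v1 v2 + ff h u2 u1 v1 v2 = ff h u1 u2 v2 v1 + ff h u2 u1 v2 v1"
proof -
  have a: "u1 - u2 \<noteq> 0" "u2 - u1 \<noteq> 0" using assms by auto
  show ?thesis using assms a
    by (simp add: ff_eq divide_simps; simp add: algebra_simps)
qed

lemma I4:
  assumes "u \<noteq> 0" "v1 \<noteq> 0" "v2 \<noteq> 0" "v1 \<noteq> v2"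
  shows "1 - h * v1 / u = al h v1 v2 * (1 - v1 / u) + be h v1 v2 * (1 - v2 / u)"
proof -
  have a: "v1 - v2 \<noteq> 0" "v2 - v1 \<noteq> 0" using assms by auto
  show ?thesis using assms a
    by (simp add: al_eq be_eq divide_simps; simp add: algebra_simps)
qed

lemma I5:
  assumes "u \<noteq> 0" "v1 \<noteq> 0" "v2 \<noteq> 0" "v1 \<noteq> v2" "h \<noteq> 0"
  shows "1 - v2 / u = al' h v1 v2 * (1 - h * v2 / u) + be' h v1 v2 * (1 - h * v1 / u)"
proof -
  have a: "v1 - v2 \<noteq> 0" "v2 - v1 \<noteq> 0" using assms by auto
  show ?thesis using assms a
    by (simp add: al'_eq be'_eq divide_simps; simp add: algebra_simps)
qed

lemma sw_sw[simp]: "sw q (sw q i) = i"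
  by (simp add: sw_def)

lemma inv_bij: "(\<forall>p\<in>R. f p \<in> R) \<Longrightarrow> (\<forall>p\<in>R. f (f p) = p) \<Longrightarrow> bij_betw f R R"
  by (rule bij_betw_byWitness[where f'=f]) auto

lemma CP_reindex:
  assumes "\<forall>p\<in>R. (\<sigma> (fst p), \<rho> (snd p)) \<in> R" "\<And>i. \<sigma> (\<sigma> i) = i" "\<And>i. \<rho> (\<rho> i) = i"
  shows "CP h x y R (u \<circ> \<sigma>) (v \<circ> \<rho>) = CP h (x \<circ> \<sigma>) (y \<circ> \<rho>) R u v"
proof -
  have b: "bij_betw (\<lambda>p. (\<sigma> (fst p), \<rho> (snd p))) R R"
    by (rule inv_bij) (use assms in auto)
  show ?thesis
    unfolding CP_def
    using prod.reindex_bij_betw[OF b, of "\<lambda>p. gx h ((x \<circ> \<sigma>) (fst p)) ((y \<circ> \<rho>) (snd p)) (v (snd p)) (u (fst p))"]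
    by (simp add: assms)
qed

lemma CP_cong:
  assumes "\<forall>p\<in>R. (y' (snd p) < x' (fst p) \<longleftrightarrow> y (snd p) < x (fst p)) \<and> (x' (fst p) < y' (snd p) \<longleftrightarrow> x (fst p) < y (snd p))"
  shows "CP h x' y' R u v = CP h x y R u v"
  unfolding CP_def using assms by (intro prod.cong) (auto simp: gx_def)

lemma DP_reindex:
  assumes "\<forall>p\<in>R. (\<sigma> (fst p), \<sigma> (snd p)) \<in> R" "\<And>i. \<sigma> (\<sigma> i) = i"
  shows "DP h R (u \<circ> \<sigma>) = DP h R u"
proof -
  have b: "bij_betw (\<lambda>p. (\<sigma> (fst p), \<sigma> (snd p))) R R"
    by (rule inv_bij) (use assms in auto)
  show ?thesis
    unfolding DP_def
    using prod.reindex_bij_betw[OF b, of "\<lambda>p. dd h (u (fst p)) (u (snd p))"]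
    by (simp add: assms)
qed

lemma prop_decomp:
  fixes x y :: "nat \<Rightarrow> nat"
  assumes q: "1 \<le> q" "q+1 \<le> M" and q': "1 \<le> q'" "q'+1 \<le> M'"
    and xq: "x q = A" "x (q+1) = A+1" and yq: "y q' = A" "y (q'+1) = A+1"
    and ix: "inj_on x {1..M}" and iy: "inj_on y {1..M'}"
  defines "Rc \<equiv> {1..M}\<times>{1..M'} - {q,q+1}\<times>{q',q'+1}" and "Rd \<equiv> Pairs M - {(q,q+1)}"
  shows "CP h x y ({1..M}\<times>{1..M'}) u v * DP h (Pairs M) u
           = (CP h x y Rc u v * DP h Rd u) * ff h (u q) (u (q+1)) (v q') (v (q'+1))"
    and "CP h x y Rc (u \<circ> sw q) v * DP h Rd (u \<circ> sw q) = CP h x y Rc u v * DP h Rd u"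
    and "CP h x y Rc u (v \<circ> sw q') * DP h Rd u = CP h x y Rc u v * DP h Rd u"
proof -
  have sub: "{q,q+1}\<times>{q',q'+1} \<subseteq> {1..M}\<times>{1..M'}" using q q' by auto
  have c1: "CP h x y ({1..M}\<times>{1..M'}) u v = CP h x y Rc u v * CP h x y ({q,q+1}\<times>{q',q'+1}) u v"
    unfolding CP_def Rc_def by (rule prod.subset_diff[OF sub]) simp
  have c2: "CP h x y ({q,q+1}\<times>{q',q'+1}) u v = (1 - v (q'+1) / u q) * (1 - h * v q' / u (q+1))"
    using xq yq by (simp add: CP_def gx_def)
  have subd: "{(q,q+1)} \<subseteq> Pairs M" using q by (auto simp: Pairs_def)
  have finP: "finite (Pairs M)" by (simp add: Pairs_def)
  have d1: "DP h (Pairs M) u = DP h Rd u * dd h (u q) (u (q+1))"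
    unfolding DP_def Rd_def by (subst prod.subset_diff[OF subd finP]) simp
  show "CP h x y ({1..M}\<times>{1..M'}) u v * DP h (Pairs M) u
           = (CP h x y Rc u v * DP h Rd u) * ff h (u q) (u (q+1)) (v q') (v (q'+1))"
    unfolding c1 c2 d1 ff_def by (simp add: mult_ac)
  have yc: "y c \<noteq> A \<and> y c \<noteq> A + 1" if "c \<in> {1..M'}" "c \<noteq> q'" "c \<noteq> q'+1" for c
    using inj_onD[OF iy, of c q'] inj_onD[OF iy, of c "q'+1"] that q' yq by auto
  have xc: "x c \<noteq> A \<and> x c \<noteq> A + 1" if "c \<in> {1..M}" "c \<noteq> q" "c \<noteq> q+1" for c
    using inj_onD[OF ix, of c q] inj_onD[OF ix, of c "q+1"] that q xq by auto
  have swq: "sw q a \<in> {1..M}" if "a \<in> {1..M}" for a using that q by (auto simp: sw_def)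
  have swq': "sw q' a \<in> {1..M'}" if "a \<in> {1..M'}" for a using that q' by (auto simp: sw_def)
  have "CP h x y Rc (u \<circ> sw q) (v \<circ> id) = CP h (x \<circ> sw q) (y \<circ> id) Rc u v"
  proof (rule CP_reindex)
    show "\<forall>p\<in>Rc. (sw q (fst p), id (snd p)) \<in> Rc"
      using q by (auto simp: Rc_def sw_def split: if_splits)
  qed auto
  also have "\<dots> = CP h x y Rc u v"
  proof (rule CP_cong, rule ballI)
    fix p assume p: "p \<in> Rc"
    obtain a c where pe: "p = (a,c)" by force
    show "((y \<circ> id) (snd p) < (x \<circ> sw q) (fst p)) = (y (snd p) < x (fst p)) \<and>
          ((x \<circ> sw q) (fst p) < (y \<circ> id) (snd p)) = (x (fst p) < y (snd p))"
    proof (cases "a = q \<or> a = q+1")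
      case True
      then have "c \<noteq> q' \<and> c \<noteq> q'+1" "c \<in> {1..M'}" using p pe by (auto simp: Rc_def)
      then have "y c \<noteq> A \<and> y c \<noteq> A+1" using yc by auto
      then show ?thesis using True xq pe by (auto simp: sw_def)
    next
      case False
      then show ?thesis using pe by (auto simp: sw_def)
    qed
  qed
  finally have e1: "CP h x y Rc (u \<circ> sw q) v = CP h x y Rc u v" by simp
  have e2: "DP h Rd (u \<circ> sw q) = DP h Rd u"
  proof (rule DP_reindex)
    show "\<forall>p\<in>Rd. (sw q (fst p), sw q (snd p)) \<in> Rd"
      using q by (auto simp: Rd_def Pairs_def sw_def)
  qed simp
  show "CP h x y Rc (u \<circ> sw q) v * DP h Rd (u \<circ> sw q) = CP h x y Rc u v * DP h Rd u"
    by (simp add: e1 e2)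
  have "CP h x y Rc (u \<circ> id) (v \<circ> sw q') = CP h (x \<circ> id) (y \<circ> sw q') Rc u v"
  proof (rule CP_reindex)
    show "\<forall>p\<in>Rc. (id (fst p), sw q' (snd p)) \<in> Rc"
      using q' by (auto simp: Rc_def sw_def split: if_splits)
  qed auto
  also have "\<dots> = CP h x y Rc u v"
  proof (rule CP_cong, rule ballI)
    fix p assume p: "p \<in> Rc"
    obtain a c where pe: "p = (a,c)" by force
    show "((y \<circ> sw q') (snd p) < (x \<circ> id) (fst p)) = (y (snd p) < x (fst p)) \<and>
          ((x \<circ> id) (fst p) < (y \<circ> sw q') (snd p)) = (x (fst p) < y (snd p))"
    proof (cases "c = q' \<or> c = q'+1")
      case True
      then have "a \<noteq> q \<and> a \<noteq> q+1" "a \<in> {1..M}" using p pe by (auto simp: Rc_def)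
      then have "x a \<noteq> A \<and> x a \<noteq> A+1" using xc by auto
      then show ?thesis using True yq pe by (auto simp: sw_def)
    next
      case False
      then show ?thesis using pe by (auto simp: sw_def)
    qed
  qed
  finally show "CP h x y Rc u (v \<circ> sw q') * DP h Rd u = CP h x y Rc u v * DP h Rd u"
    by simp
qed

lemma base_decomp:
  assumes r: "r \<in> {1..M}" and q': "1 \<le> q'" "q'+1 \<le> M'"
  shows "CP h x y ({1..M}\<times>{1..M'}) u v = CP h x y ({1..M}\<times>{1..M'} - {r}\<times>{q',q'+1}) u v
           * (gx h (x r) (y q') (v q') (u r) * gx h (x r) (y (q'+1)) (v (q'+1)) (u r))"
proof -
  have sub: "{r}\<times>{q',q'+1} \<subseteq> {1..M}\<times>{1..M'}" using r q' by auto
  show ?thesis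
    unfolding CP_def by (subst prod.subset_diff[OF sub]) auto
qed

lemma base_swap:
  fixes x y :: "nat \<Rightarrow> nat"
  assumes r: "r \<in> {1..M}" and q': "1 \<le> q'" "q'+1 \<le> M'"
    and xr: "x r = A \<or> x r = A+1" and xo: "\<forall>b\<in>{1..M}. b \<noteq> r \<longrightarrow> x b \<noteq> A \<and> x b \<noteq> A+1"
    and yq: "y q' = A" "y (q'+1) = A+1" and iy: "inj_on y {1..M'}"
  defines "Rb \<equiv> {1..M}\<times>{1..M'} - {r}\<times>{q',q'+1}"
  shows "CP h (sw A \<circ> x) y Rb u v = CP h x y Rb u v"
    and "CP h x y Rb u (v \<circ> sw q') = CP h x y Rb u v"
proof -
  have yc: "y c \<noteq> A \<and> y c \<noteq> A + 1" if "c \<in> {1..M'}" "c \<noteq> q'" "c \<noteq> q'+1" for c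
    using inj_onD[OF iy, of c q'] inj_onD[OF iy, of c "q'+1"] that q' yq by auto
  show "CP h (sw A \<circ> x) y Rb u v = CP h x y Rb u v"
  proof (rule CP_cong, rule ballI)
    fix p assume p: "p \<in> Rb"
    obtain b c where pe: "p = (b,c)" by force
    show "(y (snd p) < (sw A \<circ> x) (fst p)) = (y (snd p) < x (fst p)) \<and>
          ((sw A \<circ> x) (fst p) < y (snd p)) = (x (fst p) < y (snd p))"
    proof (cases "b = r")
      case True
      then have "c \<noteq> q' \<and> c \<noteq> q'+1" "c \<in> {1..M'}" using p pe by (auto simp: Rb_def)
      then have "y c \<noteq> A \<and> y c \<noteq> A+1" using yc by auto
      then show ?thesis using True xr pe by (auto simp: sw_def)
    next
      case False
      then have "x b \<noteq> A \<and> x b \<noteq> A+1" using xo p pe by (auto simp: Rb_def)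
      then show ?thesis using pe by (auto simp: sw_def)
    qed
  qed
  have "CP h x y Rb (u \<circ> id) (v \<circ> sw q') = CP h (x \<circ> id) (y \<circ> sw q') Rb u v"
  proof (rule CP_reindex)
    show "\<forall>p\<in>Rb. (id (fst p), sw q' (snd p)) \<in> Rb"
      using q' by (auto simp: Rb_def sw_def split: if_splits)
  qed auto
  also have "\<dots> = CP h x y Rb u v"
  proof (rule CP_cong, rule ballI)
    fix p assume p: "p \<in> Rb"
    obtain b c where pe: "p = (b,c)" by force
    show "((y \<circ> sw q') (snd p) < (x \<circ> id) (fst p)) = (y (snd p) < x (fst p)) \<and>
          ((x \<circ> id) (fst p) < (y \<circ> sw q') (snd p)) = (x (fst p) < y (snd p))"
    proof (cases "c = q' \<or> c = q'+1")
      case True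
      then have "b \<noteq> r" "b \<in> {1..M}" using p pe by (auto simp: Rb_def)
      then have "x b \<noteq> A \<and> x b \<noteq> A+1" using xo by auto
      then show ?thesis using True yq pe by (auto simp: sw_def)
    next
      case False
      then show ?thesis using pe by (auto simp: sw_def)
    qed
  qed
  finally show "CP h x y Rb u (v \<circ> sw q') = CP h x y Rb u v" by simp
qed

lemma sym_base:
  fixes x y :: "nat \<Rightarrow> nat"
  assumes q': "1 \<le> q'" "q'+1 \<le> M'"
    and xo: "\<forall>b\<in>{1..M}. x b \<noteq> A \<and> x b \<noteq> A+1"
    and yq: "y q' = A" "y (q'+1) = A+1"
  shows "CP h x y ({1..M}\<times>{1..M'}) u (v \<circ> sw q') = CP h x y ({1..M}\<times>{1..M'}) u v"
proof -
  have "CP h x y ({1..M}\<times>{1..M'}) (u \<circ> id) (v \<circ> sw q') = CP h (x \<circ> id) (y \<circ> sw q') ({1..M}\<times>{1..M'}) u v"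
  proof (rule CP_reindex)
    show "\<forall>p\<in>{1..M}\<times>{1..M'}. (id (fst p), sw q' (snd p)) \<in> {1..M}\<times>{1..M'}"
      using q' by (auto simp: sw_def)
  qed auto
  also have "\<dots> = CP h x y ({1..M}\<times>{1..M'}) u v"
  proof (rule CP_cong, rule ballI)
    fix p assume p: "p \<in> {1..M}\<times>{1..M'}"
    obtain b c where pe: "p = (b,c)" by force
    have "x b \<noteq> A \<and> x b \<noteq> A+1" using xo p pe by auto
    then show "((y \<circ> sw q') (snd p) < (x \<circ> id) (fst p)) = (y (snd p) < x (fst p)) \<and>
          ((x \<circ> id) (fst p) < (y \<circ> sw q') (snd p)) = (x (fst p) < y (snd p))"
      using yq pe by (auto simp: sw_def)
  qed
  finally show ?thesis by simp
qed

lemma sw_transpose: "sw q = Transposition.transpose q (Suc q)"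
  by (auto simp: sw_def fun_eq_iff transpose_def)

lemma perm_sw_bij:
  assumes "1 \<le> q" "q + 1 \<le> M"
  shows "bij_betw (\<lambda>\<pi>. \<pi> \<circ> sw q) {\<pi>. \<pi> permutes {1..M}} {\<pi>. \<pi> permutes {1..M}}"
proof (rule inv_bij)
  have "sw q permutes {1..M}" unfolding sw_transpose
    by (rule permutes_swap_id) (use assms in auto)
  then show "\<forall>p\<in>{\<pi>. \<pi> permutes {1..M}}. p \<circ> sw q \<in> {\<pi>. \<pi> permutes {1..M}}"
    by (auto intro: permutes_compose)
  show "\<forall>p\<in>{\<pi>. \<pi> permutes {1..M}}. p \<circ> sw q \<circ> sw q = p"
    by (auto simp: fun_eq_iff)
qed

lemma perm_sum_sw:
  assumes "1 \<le> q" "q + 1 \<le> M"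
  shows "(\<Sum>\<pi>\<in>{\<pi>. \<pi> permutes {1..M}}. g (\<pi> \<circ> sw q)) = (\<Sum>\<pi>\<in>{\<pi>. \<pi> permutes {1..M}}. g \<pi>)"
  using sum.reindex_bij_betw[OF perm_sw_bij[OF assms], of g] by simp

lemma Sy_Suc: "1 \<le> j \<Longrightarrow> Sy h m e t (Suc j) v =
   (\<Sum>\<pi>\<in>{\<pi>. \<pi> permutes {1..m j}}. Sy h m e t j (t j \<circ> \<pi>) * Lf h m e j (t j \<circ> \<pi>) v)"
  by simp

lemma tcond:
  fixes t :: "nat \<Rightarrow> complex"
  assumes "\<forall>b\<in>{1..M}. t b \<noteq> (0::complex)" "\<forall>b\<in>{1..M}. \<forall>c\<in>{1..M}. b \<noteq> c \<longrightarrow> t b \<noteq> t c"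
    "\<pi> permutes {1..M}" "1 \<le> q" "q + 1 \<le> M"
  shows "(t \<circ> \<pi>) q \<noteq> 0" "(t \<circ> \<pi>) (q+1) \<noteq> 0" "(t \<circ> \<pi>) q \<noteq> (t \<circ> \<pi>) (q+1)"
proof -
  have h1: "q \<in> {1..M}" "q+1 \<in> {1..M}" using assms(4,5) by auto
  have "\<pi> q \<in> {1..M}" "\<pi> (q+1) \<in> {1..M}"
    using h1 permutes_in_image[OF assms(3)] by blast+
  moreover have "\<pi> q \<noteq> \<pi> (q+1)" using permutes_inj[OF assms(3)] by (auto dest: injD)
  ultimately show "(t \<circ> \<pi>) q \<noteq> 0" "(t \<circ> \<pi>) (q+1) \<noteq> 0" "(t \<circ> \<pi>) q \<noteq> (t \<circ> \<pi>) (q+1)"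
    using assms(1,2) by auto
qed

lemma step_sym:
  assumes j: "1 \<le> j" and q: "1 \<le> q" "q + 1 \<le> m j"
    and hyp: "\<And>u. u q \<noteq> 0 \<Longrightarrow> u (q+1) \<noteq> 0 \<Longrightarrow> u q \<noteq> u (q+1) \<Longrightarrow> Sy h m e t j (u \<circ> sw q) = Sy h m e t j u"
    and dec: "\<And>u v. Lf h m e j u v = Out u v * ff h (u q) (u (q+1)) (v q') (v (q'+1))"
    and o1: "\<And>u v. Out (u \<circ> sw q) v = Out u v" and o2: "\<And>u v. Out u (v \<circ> sw q') = Out u v"
    and tnz: "\<forall>b\<in>{1..m j}. t j b \<noteq> 0" and td: "\<forall>b\<in>{1..m j}. \<forall>c\<in>{1..m j}. b \<noteq> c \<longrightarrow> t j b \<noteq> t j c"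
  shows "Sy h m e t (Suc j) (v \<circ> sw q') = Sy h m e t (Suc j) v"
proof -
  let ?P = "{\<pi>. \<pi> permutes {1..m j}}"
  define F where "F w \<pi> = Sy h m e t j (t j \<circ> \<pi>) * Lf h m e j (t j \<circ> \<pi>) w" for w \<pi>
  have sw1: "sw q' q' = q'+1" "sw q' (q'+1) = q'" "sw q q = q + 1" "sw q (q+1) = q"
    "sw q' (Suc q') = q'" "sw q (Suc q) = q" by (auto simp: sw_def)
  have tm: "F (v \<circ> sw q') \<pi> + F (v \<circ> sw q') (\<pi> \<circ> sw q) = F v \<pi> + F v (\<pi> \<circ> sw q)" if "\<pi> \<in> ?P" for \<pi>
  proof -
    let ?u = "t j \<circ> \<pi>"
    have c: "?u q \<noteq> 0" "?u (q+1) \<noteq> 0" "?u q \<noteq> ?u (q+1)"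
      using tcond[OF tnz td _ q] that by auto
    have e1: "t j \<circ> (\<pi> \<circ> sw q) = ?u \<circ> sw q" by (simp add: comp_assoc)
    have "F (v \<circ> sw q') \<pi> + F (v \<circ> sw q') (\<pi> \<circ> sw q)
       = Sy h m e t j ?u * Out ?u v * (ff h (?u q) (?u (q+1)) (v (q'+1)) (v q') + ff h (?u (q+1)) (?u q) (v (q'+1)) (v q'))"
      unfolding F_def e1 hyp[OF c] dec o1 o2 by (simp add: sw1 algebra_simps)
    also have "\<dots> = Sy h m e t j ?u * Out ?u v * (ff h (?u q) (?u (q+1)) (v q') (v (q'+1)) + ff h (?u (q+1)) (?u q) (v q') (v (q'+1)))"
      using I3[OF c] by simp
    also have "\<dots> = F v \<pi> + F v (\<pi> \<circ> sw q)"
      unfolding F_def e1 hyp[OF c] dec o1 o2 by (simp add: sw1 algebra_simps)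
    finally show ?thesis .
  qed
  have "2 * (\<Sum>\<pi>\<in>?P. F (v \<circ> sw q') \<pi>) = (\<Sum>\<pi>\<in>?P. F (v \<circ> sw q') \<pi>) + (\<Sum>\<pi>\<in>?P. F (v \<circ> sw q') (\<pi> \<circ> sw q))"
    using perm_sum_sw[OF q, of "F (v \<circ> sw q')"] by simp
  also have "\<dots> = (\<Sum>\<pi>\<in>?P. F v \<pi> + F v (\<pi> \<circ> sw q))"
    by (simp add: sum.distrib[symmetric] tm)
  also have "\<dots> = 2 * (\<Sum>\<pi>\<in>?P. F v \<pi>)"
    using perm_sum_sw[OF q, of "F v"] by (simp add: sum.distrib)
  finally have "(\<Sum>\<pi>\<in>?P. F (v \<circ> sw q') \<pi>) = (\<Sum>\<pi>\<in>?P. F v \<pi>)" by simp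
  then show ?thesis using j by (simp add: F_def)
qed

lemma step_ns:
  assumes j: "1 \<le> j" and q: "1 \<le> q" "q + 1 \<le> m j"
    and hyp: "\<And>u. u q \<noteq> 0 \<Longrightarrow> u (q+1) \<noteq> 0 \<Longrightarrow> u q \<noteq> u (q+1) \<Longrightarrow>
       Sy h m e' t j u = \<alpha> (u q) (u (q+1)) * Sy h m e t j (u \<circ> sw q) + \<beta> (u q) (u (q+1)) * Sy h m e t j u"
    and lf: "\<And>u v. Lf h m e' j u v = Lf h m e j u v"
    and dec: "\<And>u v. Lf h m e j u v = Out u v * ff h (u q) (u (q+1)) (v q') (v (q'+1))"
    and o1: "\<And>u v. Out (u \<circ> sw q) v = Out u v" and o2: "\<And>u v. Out u (v \<circ> sw q') = Out u v"
    and tnz: "\<forall>b\<in>{1..m j}. t j b \<noteq> 0" and td: "\<forall>b\<in>{1..m j}. \<forall>c\<in>{1..m j}. b \<noteq> c \<longrightarrow> t j b \<noteq> t j c"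
    and iden: "\<And>u1 u2. u1 \<noteq> 0 \<Longrightarrow> u2 \<noteq> 0 \<Longrightarrow> u1 \<noteq> u2 \<Longrightarrow>
        \<alpha> u2 u1 * ff h u2 u1 (v q') (v (q'+1)) + \<beta> u1 u2 * ff h u1 u2 (v q') (v (q'+1))
      = \<alpha> (v q') (v (q'+1)) * ff h u1 u2 (v (q'+1)) (v q') + \<beta> (v q') (v (q'+1)) * ff h u1 u2 (v q') (v (q'+1))"
  shows "Sy h m e' t (Suc j) v = \<alpha> (v q') (v (q'+1)) * Sy h m e t (Suc j) (v \<circ> sw q')
          + \<beta> (v q') (v (q'+1)) * Sy h m e t (Suc j) v"
proof -
  let ?P = "{\<pi>. \<pi> permutes {1..m j}}"
  have sw1: "sw q' q' = q'+1" "sw q' (q'+1) = q'" "sw q q = q + 1" "sw q (q+1) = q"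
    "sw q' (Suc q') = q'" "sw q (Suc q) = q" by (auto simp: sw_def)
  define A where "A \<pi> = \<alpha> ((t j \<circ> \<pi>) q) ((t j \<circ> \<pi>) (q+1)) * Sy h m e t j (t j \<circ> \<pi> \<circ> sw q) * Lf h m e j (t j \<circ> \<pi>) v" for \<pi>
  have "Sy h m e' t (Suc j) v = (\<Sum>\<pi>\<in>?P. A \<pi> + \<beta> ((t j \<circ> \<pi>) q) ((t j \<circ> \<pi>) (q+1)) * Sy h m e t j (t j \<circ> \<pi>) * Lf h m e j (t j \<circ> \<pi>) v)"
  proof -
    have "Sy h m e' t j (t j \<circ> \<pi>) * Lf h m e' j (t j \<circ> \<pi>) v = A \<pi> + \<beta> ((t j \<circ> \<pi>) q) ((t j \<circ> \<pi>) (q+1)) * Sy h m e t j (t j \<circ> \<pi>) * Lf h m e j (t j \<circ> \<pi>) v"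
      if "\<pi> \<in> ?P" for \<pi>
    proof -
      have c: "(t j \<circ> \<pi>) q \<noteq> 0" "(t j \<circ> \<pi>) (q+1) \<noteq> 0" "(t j \<circ> \<pi>) q \<noteq> (t j \<circ> \<pi>) (q+1)"
        using tcond[OF tnz td _ q] that by auto
      show ?thesis unfolding lf hyp[OF c] A_def by (simp add: algebra_simps)
    qed
    then show ?thesis by (simp only: Sy_Suc[OF j]) (rule sum.cong, simp_all)
  qed
  also have "\<dots> = (\<Sum>\<pi>\<in>?P. A (\<pi> \<circ> sw q)) + (\<Sum>\<pi>\<in>?P. \<beta> ((t j \<circ> \<pi>) q) ((t j \<circ> \<pi>) (q+1)) * Sy h m e t j (t j \<circ> \<pi>) * Lf h m e j (t j \<circ> \<pi>) v)"
    by (simp only: sum.distrib perm_sum_sw[OF q])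
  also have "\<dots> = (\<Sum>\<pi>\<in>?P. Sy h m e t j (t j \<circ> \<pi>) * (\<alpha> (v q') (v (q'+1)) * Lf h m e j (t j \<circ> \<pi>) (v \<circ> sw q')
          + \<beta> (v q') (v (q'+1)) * Lf h m e j (t j \<circ> \<pi>) v))"
  proof -
    have "A (\<pi> \<circ> sw q) + \<beta> ((t j \<circ> \<pi>) q) ((t j \<circ> \<pi>) (q+1)) * Sy h m e t j (t j \<circ> \<pi>) * Lf h m e j (t j \<circ> \<pi>) v
      = Sy h m e t j (t j \<circ> \<pi>) * (\<alpha> (v q') (v (q'+1)) * Lf h m e j (t j \<circ> \<pi>) (v \<circ> sw q')
          + \<beta> (v q') (v (q'+1)) * Lf h m e j (t j \<circ> \<pi>) v)" if "\<pi> \<in> ?P" for \<pi>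
    proof -
      let ?u = "t j \<circ> \<pi>"
      have c: "?u q \<noteq> 0" "?u (q+1) \<noteq> 0" "?u q \<noteq> ?u (q+1)"
        using tcond[OF tnz td _ q] that by auto
      have e1: "t j \<circ> (\<pi> \<circ> sw q) = ?u \<circ> sw q" by (simp add: comp_assoc)
      have e2: "?u \<circ> sw q \<circ> sw q = ?u" by (simp add: fun_eq_iff)
      have "A (\<pi> \<circ> sw q) + \<beta> (?u q) (?u (q+1)) * Sy h m e t j ?u * Lf h m e j ?u v
         = Sy h m e t j ?u * Out ?u v * (\<alpha> (?u (q+1)) (?u q) * ff h (?u (q+1)) (?u q) (v q') (v (q'+1))
            + \<beta> (?u q) (?u (q+1)) * ff h (?u q) (?u (q+1)) (v q') (v (q'+1)))"
        unfolding A_def e1 e2 dec o1 by (simp add: sw1 algebra_simps)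
      also have "\<dots> = Sy h m e t j ?u * Out ?u v * (\<alpha> (v q') (v (q'+1)) * ff h (?u q) (?u (q+1)) (v (q'+1)) (v q')
            + \<beta> (v q') (v (q'+1)) * ff h (?u q) (?u (q+1)) (v q') (v (q'+1)))"
        using iden[OF c] by simp
      also have "\<dots> = Sy h m e t j ?u * (\<alpha> (v q') (v (q'+1)) * Lf h m e j ?u (v \<circ> sw q')
          + \<beta> (v q') (v (q'+1)) * Lf h m e j ?u v)"
        unfolding dec o2 by (simp add: sw1 algebra_simps)
      finally show ?thesis by simp
    qed
    then show ?thesis by (simp add: sum.distrib[symmetric])
  qed
  also have "\<dots> = \<alpha> (v q') (v (q'+1)) * Sy h m e t (Suc j) (v \<circ> sw q')
          + \<beta> (v q') (v (q'+1)) * Sy h m e t (Suc j) v"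
    using j by (simp add: sum_distrib_left sum.distrib algebra_simps)
  finally show ?thesis .
qed

lemma step_base:
  assumes j: "1 \<le> j"
    and sy: "\<And>u. Sy h m e' t j u = Sy h m e t j u"
    and lf: "\<And>u. u r \<noteq> 0 \<Longrightarrow> Lf h m e' j u v = \<alpha> * Lf h m e j u (v \<circ> sw q') + \<beta> * Lf h m e j u v"
    and r: "r \<in> {1..m j}" and tnz: "\<forall>b\<in>{1..m j}. t j b \<noteq> 0"
  shows "Sy h m e' t (Suc j) v = \<alpha> * Sy h m e t (Suc j) (v \<circ> sw q') + \<beta> * Sy h m e t (Suc j) v"
proof -
  have "Sy h m e' t (Suc j) v = (\<Sum>\<pi>\<in>{\<pi>. \<pi> permutes {1..m j}}.
      \<alpha> * (Sy h m e t j (t j \<circ> \<pi>) * Lf h m e j (t j \<circ> \<pi>) (v \<circ> sw q')) + \<beta> * (Sy h m e t j (t j \<circ> \<pi>) * Lf h m e j (t j \<circ> \<pi>) v))"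
  proof -
    have "(t j \<circ> \<pi>) r \<noteq> 0" if "\<pi> permutes {1..m j}" for \<pi>
      using tnz r permutes_in_image[OF that] by auto
    then show ?thesis using j by (auto simp: sy lf algebra_simps intro!: sum.cong)
  qed
  then show ?thesis using j by (simp add: sum.distrib sum_distrib_left)
qed

lemma Sy_cong:
  "(\<And>i. 1 \<le> i \<Longrightarrow> i < j \<Longrightarrow> (\<And>u v. Lf h m e' i u v = Lf h m e i u v)) \<Longrightarrow> Sy h m e' t j v = Sy h m e t j v"
proof (induction j arbitrary: v)
  case 0
  then show ?case by simp
next
  case (Suc j)
  show ?case
  proof (cases "j = 0")
    case False
    then show ?thesis using Suc.prems Suc.IH[OF Suc.prems] by (simp add: o_def)
  qed simp
qed

abbreviation sl :: "nat set \<Rightarrow> nat \<Rightarrow> nat" where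
  "sl S c \<equiv> sorted_list_of_set S ! (c - 1)"

lemma sl_in: "finite S \<Longrightarrow> 1 \<le> c \<Longrightarrow> c \<le> card S \<Longrightarrow> sl S c \<in> S"
  by (metis One_nat_def Suc_le_eq Suc_pred length_sorted_list_of_set nth_mem set_sorted_list_of_set)

lemma sl_less: "finite S \<Longrightarrow> 1 \<le> c \<Longrightarrow> c < d \<Longrightarrow> d \<le> card S \<Longrightarrow> sl S c < sl S d"
  using sorted_wrt_nth_less[OF strict_sorted_list_of_set[of S], of "c - 1" "d - 1"]
  by simp

lemma sl_ex: "finite S \<Longrightarrow> x \<in> S \<Longrightarrow> \<exists>c. 1 \<le> c \<and> c \<le> card S \<and> sl S c = x"
proof -
  assume f: "finite S" and x: "x \<in> S"
  then have "x \<in> set (sorted_list_of_set S)" by simp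
  then obtain i where "i < length (sorted_list_of_set S)" "sorted_list_of_set S ! i = x"
    by (auto simp: in_set_conv_nth)
  then show ?thesis by (intro exI[of _ "i+1"]) auto
qed

lemma sl_inj: "finite S \<Longrightarrow> inj_on (sl S) {1..card S}"
proof (rule inj_onI)
  fix c d assume f: "finite S" and c: "c \<in> {1..card S}" and d: "d \<in> {1..card S}" and e: "sl S c = sl S d"
  show "c = d"
  proof (rule ccontr)
    assume "c \<noteq> d"
    then have "c < d \<or> d < c" by auto
    then show False using sl_less[OF f, of c d] sl_less[OF f, of d c] c d e by auto
  qed
qed

lemma sl_adj:
  assumes f: "finite S" and A: "A \<in> S" "A + 1 \<in> S"
  shows "\<exists>c. 1 \<le> c \<and> c + 1 \<le> card S \<and> sl S c = A \<and> sl S (c+1) = A + 1"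
proof -
  obtain c where c: "1 \<le> c" "c \<le> card S" "sl S c = A" using sl_ex[OF f A(1)] by auto
  obtain d where d: "1 \<le> d" "d \<le> card S" "sl S d = A + 1" using sl_ex[OF f A(2)] by auto
  have "c < d"
  proof (rule ccontr)
    assume "\<not> c < d"
    then have "d < c \<or> d = c" by auto
    then show False using sl_less[OF f, of d c] c d by auto
  qed
  have "d = c + 1"
  proof (rule ccontr)
    assume "d \<noteq> c + 1"
    then have "c + 1 < d" using \<open>c < d\<close> by auto
    then have "sl S c < sl S (c+1)" "sl S (c+1) < sl S d"
      using sl_less[OF f, of c "c+1"] sl_less[OF f, of "c+1" d] c d by auto
    then show False using c d by auto
  qed
  then show ?thesis using c d by auto
qed

lemma sl_map:
  assumes f: "finite S" and mono: "strict_mono_on S g"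
  shows "sorted_list_of_set (g ` S) = map g (sorted_list_of_set S)"
proof -
  have inj: "inj_on g S" using mono by (rule strict_mono_on_imp_inj_on)
  have "sorted_wrt (<) (map g (sorted_list_of_set S))"
    unfolding sorted_wrt_map
    by (rule sorted_wrt_mono_rel[OF _ strict_sorted_list_of_set])
       (use mono f in \<open>auto simp: strict_mono_on_def\<close>)
  moreover have "set (map g (sorted_list_of_set S)) = g ` S" using f by simp
  moreover have "length (map g (sorted_list_of_set S)) = card (g ` S)"
    using f inj by (simp add: card_image)
  ultimately show ?thesis
    using sorted_list_of_set_unique[of "g ` S" "map g (sorted_list_of_set S)"] f by auto
qed

lemma sw_mono: "\<not> (A \<in> S \<and> A + 1 \<in> S) \<Longrightarrow> strict_mono_on S (sw A)"
  unfolding strict_mono_on_def sw_def by auto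

lemma sw_img: "A \<in> S \<Longrightarrow> A + 1 \<in> S \<Longrightarrow> sw A ` S = S"
proof -
  assume a: "A \<in> S" "A + 1 \<in> S"
  have "sw A ` S \<subseteq> S" using a by (auto simp: sw_def)
  moreover have "S \<subseteq> sw A ` S"
  proof
    fix x assume "x \<in> S"
    then have "sw A x \<in> S" using a by (auto simp: sw_def)
    then show "x \<in> sw A ` S" by (metis image_eqI sw_sw)
  qed
  ultimately show ?thesis by auto
qed

lemma sw_cmp: "\<not> ((x = A \<and> y = A + 1) \<or> (x = A + 1 \<and> y = A)) \<Longrightarrow> (sw A x < sw A y \<longleftrightarrow> x < y)"
  unfolding sw_def by auto

definition JJ :: "(nat \<Rightarrow> nat set) \<Rightarrow> nat \<Rightarrow> nat set" where
  "JJ I j = (\<Union>i\<in>{1..j}. I i)"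

lemma iel_JJ: "iel I j c = sl (JJ I j) c"
  by (simp add: iel_def JJ_def)

lemma JJ_swap: "JJ (swapI A I) j = sw A ` JJ I j"
  by (auto simp: JJ_def swapI_def)

lemma iel_swap:
  assumes "finite (JJ I j)" "1 \<le> c" "c \<le> card (JJ I j)"
  shows "iel (swapI A I) j c = (if A \<in> JJ I j \<and> A + 1 \<in> JJ I j then iel I j c else sw A (iel I j c))"
proof (cases "A \<in> JJ I j \<and> A + 1 \<in> JJ I j")
  case True
  then show ?thesis by (simp add: iel_JJ JJ_swap sw_img)
next
  case False
  have "sorted_list_of_set (sw A ` JJ I j) = map (sw A) (sorted_list_of_set (JJ I j))"
    by (rule sl_map[OF assms(1) sw_mono[OF False]])
  then show ?thesis using assms by (simp only: if_not_P[OF False]) (simp add: iel_JJ JJ_swap)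
qed

locale ws =
  fixes N n :: nat and lam :: "nat \<Rightarrow> nat" and I :: "nat \<Rightarrow> nat set" and a k l :: nat
    and h :: complex and t :: "nat \<Rightarrow> nat \<Rightarrow> complex"
  assumes N: "N \<ge> 1"
    and lam_sum: "(\<Sum>j=1..N. lam j) = n"
    and I: "I \<in> ordered_partitions N n lam"
    and a: "1 \<le> a" "a \<le> n - 1"
    and k: "k \<in> {1..N}" "a \<in> I k"
    and l: "l \<in> {1..N}" "a + 1 \<in> I l"
    and h: "h \<noteq> 0"
    and t_nz: "\<And>j b. j \<in> {1..N-1} \<Longrightarrow> b \<in> {1..lamsum lam j} \<Longrightarrow> t j b \<noteq> 0"
    and t_dist: "\<And>j b c. j \<in> {1..N-1} \<Longrightarrow> b \<in> {1..lamsum lam j} \<Longrightarrow>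
                   c \<in> {1..lamsum lam j} \<Longrightarrow> b \<noteq> c \<Longrightarrow> t j b \<noteq> t j c"
begin

abbreviation "m \<equiv> lamsum lam"
abbreviation "e \<equiv> iel I"
abbreviation "e' \<equiv> iel (swapI a I)"
abbreviation "L \<equiv> max k l"

definition qq :: "nat \<Rightarrow> nat" where
  "qq j = (SOME q. 1 \<le> q \<and> q + 1 \<le> m j \<and> e j q = a \<and> e j (q+1) = a + 1)"

lemma Icard: "i \<in> {1..N} \<Longrightarrow> card (I i) = lam i"
  and Iun: "(\<Union>i\<in>{1..N}. I i) = {1..n}"
  and Idisj: "i \<in> {1..N} \<Longrightarrow> i' \<in> {1..N} \<Longrightarrow> i \<noteq> i' \<Longrightarrow> I i \<inter> I i' = {}"
  and Iout: "i \<notin> {1..N} \<Longrightarrow> I i = {}"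
  using I by (auto simp: ordered_partitions_def)

lemma I_sub: "I i \<subseteq> {1..n}"
  using Iun Iout by (cases "i \<in> {1..N}") auto

lemma JJ_sub: "JJ I j \<subseteq> {1..n}"
  using I_sub by (auto simp: JJ_def)

lemma JJ_fin: "finite (JJ I j)"
  using JJ_sub finite_subset by blast

lemma JJ_mono: "j \<le> j' \<Longrightarrow> JJ I j \<subseteq> JJ I j'"
  unfolding JJ_def by (rule UN_mono) auto

lemma JJ_card: "j \<le> N \<Longrightarrow> card (JJ I j) = m j"
proof -
  assume j: "j \<le> N"
  have "card (JJ I j) = (\<Sum>i\<in>{1..j}. card (I i))"
    unfolding JJ_def
    by (rule card_UN_disjoint) (use j I_sub Idisj in \<open>auto intro: finite_subset\<close>)
  also have "\<dots> = (\<Sum>i\<in>{1..j}. lam i)" using j Icard by (intro sum.cong) auto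
  finally show ?thesis by (simp add: lamsum_def)
qed

lemma JJ_N: "JJ I N = {1..n}"
  using Iun by (simp add: JJ_def)

lemma mem: "k' \<in> {1..N} \<Longrightarrow> x \<in> I k' \<Longrightarrow> (x \<in> JJ I j \<longleftrightarrow> k' \<le> j)"
proof
  assume k': "k' \<in> {1..N}" "x \<in> I k'" and "x \<in> JJ I j"
  then obtain i where i: "i \<in> {1..j}" "x \<in> I i" by (auto simp: JJ_def)
  then have "i \<in> {1..N}" using Iout by fastforce
  then have "i = k'" using Idisj[of i k'] k' i by auto
  then show "k' \<le> j" using i by auto
next
  assume "k' \<in> {1..N}" "x \<in> I k'" "k' \<le> j"
  then show "x \<in> JJ I j" by (auto simp: JJ_def)
qed

lemma memA: "a \<in> JJ I j \<longleftrightarrow> k \<le> j" using mem[OF k] .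
lemma memB: "a + 1 \<in> JJ I j \<longleftrightarrow> l \<le> j" using mem[OF l] .
lemma both: "(a \<in> JJ I j \<and> a + 1 \<in> JJ I j) \<longleftrightarrow> L \<le> j" using memA memB by auto

lemma L_bounds: "1 \<le> L" "L \<le> N" using k l by auto

lemma e_in: "j \<le> N \<Longrightarrow> c \<in> {1..m j} \<Longrightarrow> e j c \<in> JJ I j"
  using sl_in[OF JJ_fin[of j], of c] JJ_card by (simp add: iel_JJ)

lemma e_inj: "j \<le> N \<Longrightarrow> inj_on (e j) {1..m j}"
  using sl_inj[OF JJ_fin[of j]] JJ_card by (simp add: iel_JJ[abs_def])

lemma e'_eq: "j \<le> N \<Longrightarrow> c \<in> {1..m j} \<Longrightarrow> e' j c = (if L \<le> j then e j c else sw a (e j c))"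
  using iel_swap[OF JJ_fin[of j], of c a] JJ_card both by simp

lemma qq: assumes "L \<le> j" "j \<le> N"
  shows "1 \<le> qq j \<and> qq j + 1 \<le> m j \<and> e j (qq j) = a \<and> e j (qq j + 1) = a + 1"
proof -
  have "\<exists>q. 1 \<le> q \<and> q + 1 \<le> m j \<and> e j q = a \<and> e j (q+1) = a + 1"
    using sl_adj[OF JJ_fin[of j], of a] both[of j] assms JJ_card by (simp add: iel_JJ)
  then show ?thesis unfolding qq_def by (rule someI_ex)
qed

lemma eN: "c \<in> {1..n} \<Longrightarrow> e N c = c"
proof -
  assume c: "c \<in> {1..n}"
  have "{1..n} = {1..<Suc n}" by auto
  then have "sorted_list_of_set {1..n} = [1..<Suc n]"
    by (simp only: sorted_list_of_set_range)
  then show ?thesis using c by (simp del: upt_Suc add: iel_JJ JJ_N nth_upt)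
qed

lemma mN: "m N = n"
  using lam_sum by (simp add: lamsum_def)

lemma qqN: "qq N = a"
proof -
  have "1 \<le> qq N \<and> qq N + 1 \<le> m N \<and> e N (qq N) = a"
    using qq[of N] L_bounds by auto
  then show ?thesis using eN[of "qq N"] mN by auto
qed

lemma lf_hi: "L \<le> i \<Longrightarrow> i + 1 \<le> N \<Longrightarrow> Lf h m e' i u v = Lf h m e i u v"
  unfolding Lf_def
  by (rule arg_cong2[where f="(*)"], rule CP_cong, auto simp: e'_eq)

lemma lf_lo: "i + 1 < L \<Longrightarrow> Lf h m e' i u v = Lf h m e i u v"
proof -
  assume i: "i + 1 < L"
  then have iN: "Suc i \<le> N" "i \<le> N" using L_bounds by auto
  have nb: "\<not> (a \<in> JJ I (Suc i) \<and> a + 1 \<in> JJ I (Suc i))" using both i by auto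
  show ?thesis
    unfolding Lf_def
  proof (rule arg_cong2[where f="(*)"], rule CP_cong, rule ballI)
    fix p assume p: "p \<in> {1..m i} \<times> {1..m (Suc i)}"
    obtain b c where pe: "p = (b, c)" by force
    have b: "b \<in> {1..m i}" and c: "c \<in> {1..m (Suc i)}" using p pe by auto
    have x: "e i b \<in> JJ I (Suc i)" using e_in[OF iN(2) b] JJ_mono[of i "Suc i"] by auto
    have y: "e (Suc i) c \<in> JJ I (Suc i)" using e_in[OF iN(1) c] by auto
    have ne: "\<not> ((e (Suc i) c = a \<and> e i b = a + 1) \<or> (e (Suc i) c = a + 1 \<and> e i b = a))"
      using x y nb by auto
    have ne2: "\<not> ((e i b = a \<and> e (Suc i) c = a + 1) \<or> (e i b = a + 1 \<and> e (Suc i) c = a))"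
      using x y nb by auto
    have e1: "e' i b = sw a (e i b)" using e'_eq[OF iN(2) b] i by auto
    have e2: "e' (Suc i) c = sw a (e (Suc i) c)" using e'_eq[OF iN(1) c] i by auto
    show "(e' (Suc i) (snd p) < e' i (fst p)) = (e (Suc i) (snd p) < e i (fst p)) \<and>
          (e' i (fst p) < e' (Suc i) (snd p)) = (e i (fst p) < e (Suc i) (snd p))"
      unfolding pe fst_conv snd_conv e1 e2 sw_cmp[OF ne] sw_cmp[OF ne2] by simp
  qed simp
qed

end

context ws
begin

lemma t_conds: "1 \<le> j \<Longrightarrow> j + 1 \<le> N \<Longrightarrow> (\<forall>b\<in>{1..m j}. t j b \<noteq> 0) \<and>
   (\<forall>b\<in>{1..m j}. \<forall>c\<in>{1..m j}. b \<noteq> c \<longrightarrow> t j b \<noteq> t j c)"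
  using t_nz t_dist by auto

lemma prop_level:
  assumes "L \<le> j" "j + 1 \<le> N"
  defines "Out \<equiv> \<lambda>u v. CP h (e j) (e (Suc j)) ({1..m j}\<times>{1..m (Suc j)} - {qq j, qq j+1}\<times>{qq (Suc j), qq (Suc j)+1}) u v
                 * DP h (Pairs (m j) - {(qq j, qq j+1)}) u"
  shows "\<And>u v. Lf h m e j u v = Out u v * ff h (u (qq j)) (u (qq j+1)) (v (qq (Suc j))) (v (qq (Suc j)+1))"
    and "\<And>u v. Out (u \<circ> sw (qq j)) v = Out u v"
    and "\<And>u v. Out u (v \<circ> sw (qq (Suc j))) = Out u v"
proof -
  have q: "1 \<le> qq j \<and> qq j + 1 \<le> m j \<and> e j (qq j) = a \<and> e j (qq j + 1) = a + 1"
    using qq assms by auto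
  have q': "1 \<le> qq (Suc j) \<and> qq (Suc j) + 1 \<le> m (Suc j) \<and> e (Suc j) (qq (Suc j)) = a \<and> e (Suc j) (qq (Suc j) + 1) = a + 1"
    using qq assms by auto
  have ix: "inj_on (e j) {1..m j}" using e_inj assms by auto
  have iy: "inj_on (e (Suc j)) {1..m (Suc j)}" using e_inj assms by auto
  note pd = prop_decomp[of "qq j" "m j" "qq (Suc j)" "m (Suc j)" "e j" a "e (Suc j)" h, OF _ _ _ _ _ _ _ _ ix iy]
  show "\<And>u v. Lf h m e j u v = Out u v * ff h (u (qq j)) (u (qq j+1)) (v (qq (Suc j))) (v (qq (Suc j)+1))"
    unfolding Lf_def Out_def using pd(1) q q' by auto
  show "\<And>u v. Out (u \<circ> sw (qq j)) v = Out u v"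
    unfolding Out_def using pd(2) q q' by auto
  show "\<And>u v. Out u (v \<circ> sw (qq (Suc j))) = Out u v"
    unfolding Out_def using pd(3) q q' by auto
qed

lemma claim_sym:
  assumes kl: "k = l"
  shows "L \<le> j \<Longrightarrow> j \<le> N \<Longrightarrow> v (qq j) \<noteq> 0 \<Longrightarrow> v (qq j + 1) \<noteq> 0 \<Longrightarrow> v (qq j) \<noteq> v (qq j + 1) \<Longrightarrow>
     Sy h m e t j (v \<circ> sw (qq j)) = Sy h m e t j v"
proof (induction j arbitrary: v)
  case 0
  then show ?case using L_bounds by auto
next
  case (Suc j)
  show ?case
  proof (cases "Suc j = L")
    case True
    show ?thesis
    proof (cases "j = 0")
      case True
      then show ?thesis by simp
    next
      case False
      then have j: "1 \<le> j" by auto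
      have q': "1 \<le> qq (Suc j) \<and> qq (Suc j) + 1 \<le> m (Suc j) \<and> e (Suc j) (qq (Suc j)) = a \<and> e (Suc j) (qq (Suc j) + 1) = a + 1"
        using qq Suc.prems by auto
      have xo: "\<forall>b\<in>{1..m j}. e j b \<noteq> a \<and> e j b \<noteq> a + 1"
        using e_in[of j] memA[of j] memB[of j] True kl Suc.prems by fastforce
      have "Lf h m e j u (v \<circ> sw (qq (Suc j))) = Lf h m e j u v" for u
        unfolding Lf_def using sym_base[of "qq (Suc j)" "m (Suc j)" "m j" "e j" a "e (Suc j)" h u v] q' xo
        by auto
      then show ?thesis using j by (simp add: o_def)
    qed
  next
    case False
    then have Lj: "L \<le> j" using Suc.prems by auto
    then have j: "1 \<le> j" using L_bounds by auto
    have jN: "j + 1 \<le> N" using Suc.prems by auto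
    have q: "1 \<le> qq j \<and> qq j + 1 \<le> m j" using qq Lj jN by auto
    have IH': "Sy h m e t j (u \<circ> sw (qq j)) = Sy h m e t j u"
      if "u (qq j) \<noteq> 0" "u (qq j + 1) \<noteq> 0" "u (qq j) \<noteq> u (qq j + 1)" for u
      using Suc.IH[of u] Lj jN that by linarith
    show ?thesis
      by (rule step_sym[OF j _ _ IH' prop_level[OF Lj jN]])
         (use q t_conds[OF j jN] in auto)
  qed
qed

lemma claim_ns:
  assumes base: "\<And>v. v (qq L) \<noteq> 0 \<Longrightarrow> v (qq L + 1) \<noteq> 0 \<Longrightarrow> v (qq L) \<noteq> v (qq L + 1) \<Longrightarrow>
     Sy h m e' t L v = \<alpha> (v (qq L)) (v (qq L + 1)) * Sy h m e t L (v \<circ> sw (qq L)) + \<beta> (v (qq L)) (v (qq L + 1)) * Sy h m e t L v"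
    and iden: "\<And>u1 u2 v1 v2. u1 \<noteq> 0 \<Longrightarrow> u2 \<noteq> 0 \<Longrightarrow> u1 \<noteq> u2 \<Longrightarrow> v1 \<noteq> 0 \<Longrightarrow> v2 \<noteq> 0 \<Longrightarrow> v1 \<noteq> v2 \<Longrightarrow>
        \<alpha> u2 u1 * ff h u2 u1 v1 v2 + \<beta> u1 u2 * ff h u1 u2 v1 v2
      = \<alpha> v1 v2 * ff h u1 u2 v2 v1 + \<beta> v1 v2 * ff h u1 u2 v1 v2"
  shows "L \<le> j \<Longrightarrow> j \<le> N \<Longrightarrow> v (qq j) \<noteq> 0 \<Longrightarrow> v (qq j + 1) \<noteq> 0 \<Longrightarrow> v (qq j) \<noteq> v (qq j + 1) \<Longrightarrow>
     Sy h m e' t j v = \<alpha> (v (qq j)) (v (qq j + 1)) * Sy h m e t j (v \<circ> sw (qq j)) + \<beta> (v (qq j)) (v (qq j + 1)) * Sy h m e t j v"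
proof (induction j arbitrary: v)
  case 0
  then show ?case using L_bounds by auto
next
  case (Suc j)
  show ?case
  proof (cases "Suc j = L")
    case True
    show ?thesis using Suc.prems(3-5) unfolding True by (rule base)
  next
    case False
    then have Lj: "L \<le> j" using Suc.prems by auto
    then have j: "1 \<le> j" using L_bounds by auto
    have jN: "j + 1 \<le> N" using Suc.prems by auto
    have q: "1 \<le> qq j \<and> qq j + 1 \<le> m j" using qq Lj jN by auto
    have IH': "Sy h m e' t j u = \<alpha> (u (qq j)) (u (qq j + 1)) * Sy h m e t j (u \<circ> sw (qq j)) + \<beta> (u (qq j)) (u (qq j + 1)) * Sy h m e t j u"
      if "u (qq j) \<noteq> 0" "u (qq j + 1) \<noteq> 0" "u (qq j) \<noteq> u (qq j + 1)" for u
      using Suc.IH[of u] Lj jN that by linarith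
    have vc: "v (qq (Suc j)) \<noteq> 0" "v (qq (Suc j) + 1) \<noteq> 0" "v (qq (Suc j)) \<noteq> v (qq (Suc j) + 1)"
      using Suc.prems by auto
    show ?thesis
      by (rule step_ns[OF j _ _ IH' lf_hi[OF Lj jN] prop_level[OF Lj jN]])
         (use q t_conds[OF j jN] iden vc in auto)
  qed
qed

end

lemma gx_vals: "gx h (A+1) A s u = 1 - h*s/u" "gx h A A s u = 1" "gx h A (A+1) s u = 1 - s/u"
  "gx h (A+1) (A+1) s u = 1"
  by (auto simp: gx_def)

context ws
begin

lemma base_common:
  assumes j: "1 \<le> j" "Suc j = L" and r: "r \<in> {1..m j}"
    and xr: "e j r = A0" and A0: "A0 = a \<or> A0 = a + 1"
    and xo: "\<forall>b\<in>{1..m j}. b \<noteq> r \<longrightarrow> e j b \<noteq> a \<and> e j b \<noteq> a + 1"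
  defines "q' \<equiv> qq (Suc j)"
  defines "C \<equiv> \<lambda>u v. CP h (e j) (e (Suc j)) ({1..m j}\<times>{1..m (Suc j)} - {r}\<times>{q',q'+1}) u v * DP h (Pairs (m j)) u"
  shows "Lf h m e' j u v = C u v * (gx h (sw a A0) a (v q') (u r) * gx h (sw a A0) (a+1) (v (q'+1)) (u r))"
    and "Lf h m e j u v = C u v * (gx h A0 a (v q') (u r) * gx h A0 (a+1) (v (q'+1)) (u r))"
    and "Lf h m e j u (v \<circ> sw q') = C u v * (gx h A0 a (v (q'+1)) (u r) * gx h A0 (a+1) (v q') (u r))"
proof -
  have jN: "Suc j \<le> N" "j \<le> N" using j L_bounds by auto
  have q': "1 \<le> q' \<and> q' + 1 \<le> m (Suc j) \<and> e (Suc j) q' = a \<and> e (Suc j) (q' + 1) = a + 1"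
    using qq[of "Suc j"] j jN unfolding q'_def by auto
  have iy: "inj_on (e (Suc j)) {1..m (Suc j)}" using e_inj jN by auto
  note bs = base_swap[of r "m j" q' "m (Suc j)" "e j" a "e (Suc j)" h, OF r _ _ _ xo _ _ iy]
  note bd = base_decomp[of r "m j" q' "m (Suc j)" h, OF r]
  have cp': "CP h (e' j) (e' (Suc j)) ({1..m j}\<times>{1..m (Suc j)}) u v = CP h (sw a \<circ> e j) (e (Suc j)) ({1..m j}\<times>{1..m (Suc j)}) u v"
  proof (rule CP_cong, rule ballI)
    fix p assume p: "p \<in> {1..m j}\<times>{1..m (Suc j)}"
    have "e' j (fst p) = sw a (e j (fst p))" using e'_eq[OF jN(2), of "fst p"] p j by auto
    moreover have "e' (Suc j) (snd p) = e (Suc j) (snd p)" using e'_eq[OF jN(1), of "snd p"] p j by auto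
    ultimately show "(e' (Suc j) (snd p) < e' j (fst p)) = (e (Suc j) (snd p) < (sw a \<circ> e j) (fst p)) \<and>
          (e' j (fst p) < e' (Suc j) (snd p)) = ((sw a \<circ> e j) (fst p) < e (Suc j) (snd p))" by simp
  qed
  show "Lf h m e' j u v = C u v * (gx h (sw a A0) a (v q') (u r) * gx h (sw a A0) (a+1) (v (q'+1)) (u r))"
    unfolding Lf_def cp' C_def using bd[of "sw a \<circ> e j" "e (Suc j)" u v] bs(1)[of u v] q' xr A0
    by (simp add: mult_ac)
  show "Lf h m e j u v = C u v * (gx h A0 a (v q') (u r) * gx h A0 (a+1) (v (q'+1)) (u r))"
    unfolding Lf_def C_def using bd[of "e j" "e (Suc j)" u v] q' xr A0
    by (simp add: mult_ac)
  have s1: "sw q' q' = q' + 1" "sw q' (q'+1) = q'" by (auto simp: sw_def)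
  show "Lf h m e j u (v \<circ> sw q') = C u v * (gx h A0 a (v (q'+1)) (u r) * gx h A0 (a+1) (v q') (u r))"
    unfolding Lf_def C_def using bd[of "e j" "e (Suc j)" u "v \<circ> sw q'"] bs(2)[of u v] q' xr A0 s1
    by (simp add: mult_ac)
qed

lemma base_lt:
  assumes kl: "k < l" and v: "v (qq L) \<noteq> 0" "v (qq L + 1) \<noteq> 0" "v (qq L) \<noteq> v (qq L + 1)"
  shows "Sy h m e' t L v = al h (v (qq L)) (v (qq L + 1)) * Sy h m e t L (v \<circ> sw (qq L))
           + be h (v (qq L)) (v (qq L + 1)) * Sy h m e t L v"
proof -
  obtain j where lj: "l = Suc j" using kl by (cases l) auto
  have j: "1 \<le> j" "Suc j = L" using kl k lj by auto
  have jN: "Suc j \<le> N" "j \<le> N" using j L_bounds by auto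
  have aJ: "a \<in> JJ I j" using memA kl lj by auto
  obtain r where r: "r \<in> {1..m j}" "e j r = a"
    using sl_ex[OF JJ_fin[of j] aJ] JJ_card[OF jN(2)] by (auto simp: iel_JJ)
  have xo: "\<forall>b\<in>{1..m j}. b \<noteq> r \<longrightarrow> e j b \<noteq> a \<and> e j b \<noteq> a + 1"
  proof (intro ballI impI)
    fix b assume b: "b \<in> {1..m j}" "b \<noteq> r"
    have "e j b \<noteq> a" using inj_onD[OF e_inj[OF jN(2)], of b r] b r by auto
    moreover have "e j b \<noteq> a + 1" using e_in[OF jN(2) b(1)] memB[of j] lj by auto
    ultimately show "e j b \<noteq> a \<and> e j b \<noteq> a + 1" by simp
  qed
  have sy: "Sy h m e' t j u = Sy h m e t j u" for u
    by (rule Sy_cong) (rule lf_lo, use j in auto)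
  have swa: "sw a a = a + 1" by (simp add: sw_def)
  note bc = base_common[OF j r(1) r(2) disjI1[OF refl] xo]
  have lf: "Lf h m e' j u v = al h (v (qq L)) (v (qq L + 1)) * Lf h m e j u (v \<circ> sw (qq L))
           + be h (v (qq L)) (v (qq L + 1)) * Lf h m e j u v" if u: "u r \<noteq> 0" for u
    unfolding bc(1)[of u v] bc(2)[of u v] bc(3)[of u v] j(2)[symmetric] swa gx_vals
    by (subst I4[OF u v[unfolded j(2)[symmetric]], of h]) (simp add: algebra_simps)
  have "Sy h m e' t (Suc j) v = al h (v (qq L)) (v (qq L + 1)) * Sy h m e t (Suc j) (v \<circ> sw (qq L))
           + be h (v (qq L)) (v (qq L + 1)) * Sy h m e t (Suc j) v"
    by (rule step_base[OF j(1) sy lf r(1)]) (use t_conds[of j] j jN in auto)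
  then show ?thesis unfolding j(2) .
qed

lemma base_gt:
  assumes kl: "l < k" and v: "v (qq L) \<noteq> 0" "v (qq L + 1) \<noteq> 0" "v (qq L) \<noteq> v (qq L + 1)"
  shows "Sy h m e' t L v = al' h (v (qq L)) (v (qq L + 1)) * Sy h m e t L (v \<circ> sw (qq L))
           + be' h (v (qq L)) (v (qq L + 1)) * Sy h m e t L v"
proof -
  obtain j where lj: "k = Suc j" using kl by (cases k) auto
  have j: "1 \<le> j" "Suc j = L" using kl l lj by auto
  have jN: "Suc j \<le> N" "j \<le> N" using j L_bounds by auto
  have aJ: "a + 1 \<in> JJ I j" using memB kl lj by auto
  obtain r where r: "r \<in> {1..m j}" "e j r = a + 1"
    using sl_ex[OF JJ_fin[of j] aJ] JJ_card[OF jN(2)] by (auto simp: iel_JJ)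
  have xo: "\<forall>b\<in>{1..m j}. b \<noteq> r \<longrightarrow> e j b \<noteq> a \<and> e j b \<noteq> a + 1"
  proof (intro ballI impI)
    fix b assume b: "b \<in> {1..m j}" "b \<noteq> r"
    have "e j b \<noteq> a + 1" using inj_onD[OF e_inj[OF jN(2)], of b r] b r by auto
    moreover have "e j b \<noteq> a" using e_in[OF jN(2) b(1)] memA[of j] lj by auto
    ultimately show "e j b \<noteq> a \<and> e j b \<noteq> a + 1" by simp
  qed
  have sy: "Sy h m e' t j u = Sy h m e t j u" for u
    by (rule Sy_cong) (rule lf_lo, use j in auto)
  have swa: "sw a (a + 1) = a" by (simp add: sw_def)
  note bc = base_common[OF j r(1) r(2) disjI2[OF refl] xo]
  have lf: "Lf h m e' j u v = al' h (v (qq L)) (v (qq L + 1)) * Lf h m e j u (v \<circ> sw (qq L))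
           + be' h (v (qq L)) (v (qq L + 1)) * Lf h m e j u v" if u: "u r \<noteq> 0" for u
    unfolding bc(1)[of u v] bc(2)[of u v] bc(3)[of u v] j(2)[symmetric] swa gx_vals
    by (subst I5[OF u v[unfolded j(2)[symmetric]] h]) (simp add: algebra_simps)
  have "Sy h m e' t (Suc j) v = al' h (v (qq L)) (v (qq L + 1)) * Sy h m e t (Suc j) (v \<circ> sw (qq L))
           + be' h (v (qq L)) (v (qq L + 1)) * Sy h m e t (Suc j) v"
    by (rule step_base[OF j(1) sy lf r(1)]) (use t_conds[of j] j jN in auto)
  then show ?thesis unfolding j(2) .
qed

lemma final:
  fixes z :: "nat \<Rightarrow> complex"
  assumes z: "z a \<noteq> 0" "z (a + 1) \<noteq> 0" "z a \<noteq> z (a + 1)"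
  shows "(k = l \<longrightarrow> W_fun N lam h I t (z \<circ> sw a) = W_fun N lam h I t z)
  \<and> (k < l \<longrightarrow> W_fun N lam h (swapI a I) t z =
        (1 - h * z a / z (a + 1)) / (1 - z a / z (a + 1)) * W_fun N lam h I t (z \<circ> sw a)
      + (h - 1) * ((z a / z (a + 1)) / (1 - z a / z (a + 1))) * W_fun N lam h I t z)
  \<and> (k > l \<longrightarrow> W_fun N lam h (swapI a I) t z =
        (1 - inverse h * z (a + 1) / z a) / (1 - z (a + 1) / z a) * W_fun N lam h I t (z \<circ> sw a)
      + (inverse h - 1) * ((z (a + 1) / z a) / (1 - z (a + 1) / z a)) * W_fun N lam h I t z)"
proof (intro conjI impI)
  have zq: "z (qq N) \<noteq> 0" "z (qq N + 1) \<noteq> 0" "z (qq N) \<noteq> z (qq N + 1)"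
    using z qqN by auto
  have LN: "L \<le> N" "N \<le> N" using L_bounds by auto
  note WS = W_Sy[OF N]
  assume kl: "k = l"
  show "W_fun N lam h I t (z \<circ> sw a) = W_fun N lam h I t z"
    using claim_sym[OF kl LN zq] qqN by (simp add: WS)
next
  have zq: "z (qq N) \<noteq> 0" "z (qq N + 1) \<noteq> 0" "z (qq N) \<noteq> z (qq N + 1)"
    using z qqN by auto
  have LN: "L \<le> N" "N \<le> N" using L_bounds by auto
  note WS = W_Sy[OF N]
  assume kl: "k < l"
  have "Sy h m e' t N z = al h (z (qq N)) (z (qq N + 1)) * Sy h m e t N (z \<circ> sw (qq N))
          + be h (z (qq N)) (z (qq N + 1)) * Sy h m e t N z"
    by (rule claim_ns[where \<alpha>="al h" and \<beta>="be h", OF base_lt[OF kl] I1 LN zq])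
  then show "W_fun N lam h (swapI a I) t z =
        (1 - h * z a / z (a + 1)) / (1 - z a / z (a + 1)) * W_fun N lam h I t (z \<circ> sw a)
      + (h - 1) * ((z a / z (a + 1)) / (1 - z a / z (a + 1))) * W_fun N lam h I t z"
    unfolding WS qqN al_def be_def by (simp add: algebra_simps)
next
  have zq: "z (qq N) \<noteq> 0" "z (qq N + 1) \<noteq> 0" "z (qq N) \<noteq> z (qq N + 1)"
    using z qqN by auto
  have LN: "L \<le> N" "N \<le> N" using L_bounds by auto
  note WS = W_Sy[OF N]
  assume kl: "l < k"
  have "Sy h m e' t N z = al' h (z (qq N)) (z (qq N + 1)) * Sy h m e t N (z \<circ> sw (qq N))
          + be' h (z (qq N)) (z (qq N + 1)) * Sy h m e t N z"
    by (rule claim_ns[where \<alpha>="al' h" and \<beta>="be' h", OF base_gt[OF kl] I2[OF _ _ _ _ _ _ h] LN zq])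
  then show "W_fun N lam h (swapI a I) t z =
        (1 - inverse h * z (a + 1) / z a) / (1 - z (a + 1) / z a) * W_fun N lam h I t (z \<circ> sw a)
      + (inverse h - 1) * ((z (a + 1) / z a) / (1 - z (a + 1) / z a)) * W_fun N lam h I t z"
    unfolding WS qqN al'_def be'_def by (simp add: algebra_simps)
qed

end

theorem corollary6p11:
  fixes N n a k l :: nat and lam :: "nat \<Rightarrow> nat" and I :: "nat \<Rightarrow> nat set"
    and h :: complex and t :: "nat \<Rightarrow> nat \<Rightarrow> complex" and z :: "nat \<Rightarrow> complex"
  assumes N: "N \<ge> 1"
    and lam_sum: "(\<Sum>j=1..N. lam j) = n"
    and I: "I \<in> ordered_partitions N n lam"
    and a: "1 \<le> a" "a \<le> n - 1"
    and k: "k \<in> {1..N}" "a \<in> I k"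
    and l: "l \<in> {1..N}" "a + 1 \<in> I l"
    and h: "h \<noteq> 0"
    and t_nz: "\<And>j b. j \<in> {1..N-1} \<Longrightarrow> b \<in> {1..lamsum lam j} \<Longrightarrow> t j b \<noteq> 0"
    and t_dist: "\<And>j b c. j \<in> {1..N-1} \<Longrightarrow> b \<in> {1..lamsum lam j} \<Longrightarrow>
                   c \<in> {1..lamsum lam j} \<Longrightarrow> b \<noteq> c \<Longrightarrow> t j b \<noteq> t j c"
    and z: "z a \<noteq> 0" "z (a + 1) \<noteq> 0" "z a \<noteq> z (a + 1)"
  shows
   "(k = l \<longrightarrow> W_fun N lam h I t (z \<circ> sw a) = W_fun N lam h I t z)
  \<and> (k < l \<longrightarrow> W_fun N lam h (swapI a I) t z =
        (1 - h * z a / z (a + 1)) / (1 - z a / z (a + 1)) * W_fun N lam h I t (z \<circ> sw a)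
      + (h - 1) * ((z a / z (a + 1)) / (1 - z a / z (a + 1))) * W_fun N lam h I t z)
  \<and> (k > l \<longrightarrow> W_fun N lam h (swapI a I) t z =
        (1 - inverse h * z (a + 1) / z a) / (1 - z (a + 1) / z a) * W_fun N lam h I t (z \<circ> sw a)
      + (inverse h - 1) * ((z (a + 1) / z a) / (1 - z (a + 1) / z a)) * W_fun N lam h I t z)"
proof -
  interpret ws N n lam I a k l h t
    by (rule ws.intro) (use N lam_sum I a k l h t_nz t_dist in auto)
  show ?thesis by (rule final[OF z])
qed

end
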